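(* For $\lambda>0$ and $\eta=(\sqrt{1/4+\lambda}-1/2)^{1/2}$, $$\sup_{x,y\in\mathbf{R}^3}|R_0^\pm(\lambda;x,y)|\lesssim\frac{\eta+\sqrt{1+\eta^2}}{1+2\eta^2},\qquad \sup_{x,y\in\mathbf{R}^3}\Big|\frac{d}{d\eta}R_0^\pm(\lambda;x,y)\Big|\lesssim\frac{1}{1+2\eta^2}.$$
   Context: $R_0^\pm(\lambda;x,y)$ is the kernel of $\lim_{\epsilon\downarrow0}(\Delta^2-\Delta-(\lambda\pm i\epsilon))^{-1}$ on $\mathbf{R}^3$: $R_0^\pm(\lambda;x,y)=\frac{1}{1+2\eta^2}\Big(\frac{e^{\pm i\eta|x-y|}}{4\pi|x-y|}-\frac{e^{-\sqrt{1+\eta^2}|x-y|}}{4\pi|x-y|}\Big)$, viewed as a function of $\eta$. *)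

theory Defs
  imports "HOL-Analysis.Analysis"
begin

text \<open>Kernel of the limiting resolvent of \<Delta>^2 - \<Delta> on R^3 as a function of eta.
  The sign parameter sigma is +1 or -1 (for R_0^+ and R_0^-).\<close>
definition R0 :: "real \<Rightarrow> real \<Rightarrow> real^3 \<Rightarrow> real^3 \<Rightarrow> complex" where
  "R0 \<sigma> \<eta> x y =
     (1 / (1 + 2 * \<eta>\<^sup>2)) *\<^sub>R
     ( exp (\<i> * complex_of_real (\<sigma> * \<eta> * norm (x - y))) / complex_of_real (4 * pi * norm (x - y))
       - complex_of_real (exp (- sqrt (1 + \<eta>\<^sup>2) * norm (x - y)) / (4 * pi * norm (x - y))))"

definition eta_of :: "real \<Rightarrow> real" where
  "eta_of lam = sqrt (sqrt (1/4 + lam) - 1/2)"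

end

theory Submission
  imports Defs
begin

lemma derivA:
  fixes \<sigma> r e :: real
  shows "((\<lambda>e. exp (\<i> * complex_of_real (\<sigma> * e * r)) / complex_of_real (4 * pi * r))
     has_vector_derivative
       (\<i> * of_real (\<sigma> * r) * exp (\<i> * complex_of_real (\<sigma> * e * r)) / complex_of_real (4 * pi * r))) (at e)"
proof -
  define g where "g = (\<lambda>z::complex. exp (\<i> * (of_real \<sigma> * z * of_real r)) / complex_of_real (4 * pi * r))"
  have eq: "(\<lambda>e. exp (\<i> * complex_of_real (\<sigma> * e * r)) / complex_of_real (4 * pi * r)) = (\<lambda>e. g (of_real e))"
    by (simp add: g_def)
  have "(g has_field_derivative (\<i> * of_real (\<sigma> * r) * exp (\<i> * complex_of_real (\<sigma> * e * r)) / complex_of_real (4 * pi * r))) (at (of_real e))"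
    unfolding g_def by (auto intro!: derivative_eq_intros simp: algebra_simps)
  then show ?thesis unfolding eq by (rule has_vector_derivative_real_field)
qed

lemma derivB:
  fixes r e :: real
  shows "((\<lambda>e. complex_of_real (exp (- sqrt (1 + e\<^sup>2) * r) / (4 * pi * r)))
     has_vector_derivative
       complex_of_real (- (e / sqrt (1 + e\<^sup>2)) * r * exp (- sqrt (1 + e\<^sup>2) * r) / (4 * pi * r))) (at e)"
proof -
  have p: "0 < 1 + e\<^sup>2" by (simp add: add_pos_nonneg)
  have "((\<lambda>e. exp (- sqrt (1 + e\<^sup>2) * r) / (4 * pi * r)) has_real_derivative
       (- (e / sqrt (1 + e\<^sup>2)) * r * exp (- sqrt (1 + e\<^sup>2) * r) / (4 * pi * r))) (at e)"
    using p by (auto intro!: derivative_eq_intros simp: field_simps)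
  then show ?thesis by (rule has_vector_derivative_of_real)
qed

lemma deriva:
  fixes e :: real
  shows "((\<lambda>e. 1 / (1 + 2 * e\<^sup>2)) has_real_derivative (- 4 * e / (1 + 2 * e\<^sup>2)\<^sup>2)) (at e)"
proof -
  have p: "0 < 1 + 2 * e\<^sup>2" by (simp add: add_pos_nonneg)
  show ?thesis using p by (auto intro!: derivative_eq_intros simp: field_simps power2_eq_square)
qed

lemma iexp1: "cmod (exp (\<i> * complex_of_real t) - 1) \<le> \<bar>t\<bar>"
proof -
  have e: "exp (\<i> * complex_of_real t) - 1 = Complex (cos t - 1) (sin t)"
    by (simp add: cis_conv_exp[symmetric] complex_eq_iff)
  have c: "cos t = 1 - 2 * (sin (t/2))\<^sup>2" using cos_double_sin[of "t/2"] by simp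
  have s: "\<bar>sin (t/2)\<bar> \<le> \<bar>t/2\<bar>" by (rule abs_sin_x_le_abs_x)
  have s2: "(sin (t/2))\<^sup>2 \<le> (t/2)\<^sup>2" using s by (metis power2_le_iff_abs_le abs_ge_zero abs_le_square_iff)
  have "(cos t - 1)\<^sup>2 + (sin t)\<^sup>2 = 2 - 2 * cos t"
    using sin_cos_squared_add[of t] by (simp add: power2_eq_square algebra_simps)
  also have "\<dots> \<le> t\<^sup>2" using c s2 by (simp add: power2_eq_square)
  finally have "sqrt ((cos t - 1)\<^sup>2 + (sin t)\<^sup>2) \<le> sqrt (t\<^sup>2)" by (rule real_sqrt_le_mono)
  then show ?thesis unfolding e complex_norm by simp
qed
lemma normAB:
  fixes \<sigma> r e :: real
  assumes sg: "\<bar>\<sigma>\<bar> = 1" and r: "r > 0" and e: "e \<ge> 0"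
  shows "cmod (exp (\<i> * complex_of_real (\<sigma> * e * r)) / complex_of_real (4 * pi * r)
       - complex_of_real (exp (- sqrt (1 + e\<^sup>2) * r) / (4 * pi * r))) \<le> (e + sqrt (1 + e\<^sup>2)) / (4 * pi)"
proof -
  define s where "s = sqrt (1 + e\<^sup>2)"
  have s0: "s \<ge> 0" unfolding s_def by simp
  have eq: "exp (\<i> * complex_of_real (\<sigma> * e * r)) / complex_of_real (4 * pi * r)
       - complex_of_real (exp (- s * r) / (4 * pi * r))
     = ((exp (\<i> * complex_of_real (\<sigma> * e * r)) - 1) + complex_of_real (1 - exp (- s * r))) / complex_of_real (4 * pi * r)"
    using r by (simp add: field_simps)
  have n1: "cmod (exp (\<i> * complex_of_real (\<sigma> * e * r)) - 1) \<le> e * r"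
    using iexp1[of "\<sigma> * e * r"] sg r e by (simp add: abs_mult)
  have x1: "exp (- s * r) \<ge> 1 - s * r" using exp_ge_add_one_self[of "- s * r"] by simp
  have x2: "exp (- s * r) \<le> 1" using s0 r by simp
  have n2: "cmod (complex_of_real (1 - exp (- s * r))) \<le> s * r"
    using x1 x2 by (simp only: norm_of_real)
  have nn: "cmod ((exp (\<i> * complex_of_real (\<sigma> * e * r)) - 1) + complex_of_real (1 - exp (- s * r))) \<le> e * r + s * r"
    using norm_triangle_ineq[of "exp (\<i> * complex_of_real (\<sigma> * e * r)) - 1" "complex_of_real (1 - exp (- s * r))"] n1 n2
    by linarith
  have "cmod (((exp (\<i> * complex_of_real (\<sigma> * e * r)) - 1) + complex_of_real (1 - exp (- s * r))) / complex_of_real (4 * pi * r))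
      \<le> (e * r + s * r) / (4 * pi * r)"
  proof -
    have d: "cmod (complex_of_real (4 * pi * r)) = 4 * pi * r" using r by (simp only: norm_of_real) simp
    show ?thesis unfolding norm_divide d
      by (rule divide_right_mono) (use nn r in simp_all)
  qed
  also have "\<dots> = (e + s) / (4 * pi)" using r by (simp add: field_simps)
  finally show ?thesis using eq unfolding s_def by simp
qed

lemma realineq:
  fixes e s :: real
  assumes e: "e \<ge> 0" and s: "s = sqrt (1 + e\<^sup>2)"
  shows "1 / (1 + 2 * e\<^sup>2) * (2 / (4 * pi)) + 4 * e / (1 + 2 * e\<^sup>2)\<^sup>2 * ((e + s) / (4 * pi))
         \<le> 1 / (1 + 2 * e\<^sup>2)"
proof -
  define q where "q = 1 + 2 * e\<^sup>2"
  have q: "q > 0" unfolding q_def by (simp add: add_pos_nonneg)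
  have s2: "s\<^sup>2 = 1 + e\<^sup>2" using s by simp
  have es: "2 * e * s \<le> e\<^sup>2 + s\<^sup>2" using sum_squares_bound[of e s] by (simp add: power2_eq_square)
  have key: "2 * q + 4 * e * (e + s) \<le> 4 * pi * q"
  proof -
    have "2 * q + 4 * e * (e + s) \<le> 4 + 12 * e\<^sup>2" 
    proof -
      have h: "e * s * 2 \<le> 1 + 2 * e\<^sup>2" using es s2 by simp
      have "2 * q + 4 * e * (e + s) = 2 + 8 * e\<^sup>2 + 2 * (e * s * 2)"
        unfolding q_def by (simp add: power2_eq_square algebra_simps)
      then show ?thesis using h by linarith
    qed
    also have "\<dots> \<le> 4 * pi * q" 
    proof -
      have "8 * q \<le> 4 * pi * q" using pi_ge_two q by simp
      moreover have "8 * q = 8 + 16 * e\<^sup>2" unfolding q_def by simp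
      moreover have "0 \<le> e\<^sup>2" by simp
      ultimately show ?thesis by linarith
    qed
    finally show ?thesis .
  qed
  have "1 / q * (2 / (4 * pi)) + 4 * e / q\<^sup>2 * ((e + s) / (4 * pi)) = (2 * q + 4 * e * (e + s)) / (4 * pi * q\<^sup>2)"
    using q by (simp add: field_simps power2_eq_square)
  also have "\<dots> \<le> (4 * pi * q) / (4 * pi * q\<^sup>2)"
    using key q by (intro divide_right_mono) auto
  also have "\<dots> = 1 / q" using q by (simp add: power2_eq_square)
  finally show ?thesis unfolding q_def .
qed

lemma derivbound:
  fixes \<sigma> r e :: real
  assumes sg: "\<bar>\<sigma>\<bar> = 1" and r: "r > 0" and e: "e \<ge> 0"
  shows "norm ((1 / (1 + 2 * e\<^sup>2)) *\<^sub>R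
     ((\<i> * of_real (\<sigma> * r) * exp (\<i> * complex_of_real (\<sigma> * e * r)) / complex_of_real (4 * pi * r))
     - complex_of_real (- (e / sqrt (1 + e\<^sup>2)) * r * exp (- sqrt (1 + e\<^sup>2) * r) / (4 * pi * r)))
     + (- 4 * e / (1 + 2 * e\<^sup>2)\<^sup>2) *\<^sub>R
     (exp (\<i> * complex_of_real (\<sigma> * e * r)) / complex_of_real (4 * pi * r)
       - complex_of_real (exp (- sqrt (1 + e\<^sup>2) * r) / (4 * pi * r)))) \<le> 1 / (1 + 2 * e\<^sup>2)"
  (is "norm (?a *\<^sub>R (?A' - ?B') + ?a' *\<^sub>R ?AB) \<le> _")
proof -
  define s where "s = sqrt (1 + e\<^sup>2)"
  have q: "1 + 2 * e\<^sup>2 > 0" by (simp add: add_pos_nonneg)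
  have d: "cmod (complex_of_real (4 * pi * r)) = 4 * pi * r" using r by (simp only: norm_of_real) simp
  have nA: "norm ?A' = 1 / (4 * pi)"
  proof -
    have "norm ?A' = cmod \<i> * cmod (of_real (\<sigma> * r)) * cmod (exp (\<i> * complex_of_real (\<sigma> * e * r))) / (4 * pi * r)"
      unfolding norm_divide d norm_mult by simp
    also have "\<dots> = r / (4 * pi * r)"
      using sg r by (simp only: norm_of_real norm_exp_i_times) (simp add: abs_mult)
    finally show ?thesis using r by simp
  qed
  have es: "e \<le> s" unfolding s_def by (rule real_le_rsqrt) simp
  have s0: "s > 0" unfolding s_def by (simp add: add_pos_nonneg)
  have nB: "norm ?B' \<le> 1 / (4 * pi)"
  proof -
    have x2: "exp (- s * r) \<le> 1" using s0 r by simp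
    have "norm ?B' = (e / s) * r * exp (- s * r) / (4 * pi * r)"
      unfolding s_def[symmetric] norm_of_real using e r s0 by (simp add: abs_mult)
    also have "\<dots> = (e / s) * exp (- s * r) / (4 * pi)" using r by simp
    also have "\<dots> \<le> 1 / (4 * pi)"
    proof (rule divide_right_mono)
      have "e / s \<le> 1" using es s0 by simp
      then show "e / s * exp (- s * r) \<le> 1" using x2 e s0
        by (metis mult_le_one divide_nonneg_pos exp_ge_zero)
    qed simp
    finally show ?thesis .
  qed
  have nAB: "norm ?AB \<le> (e + s) / (4 * pi)" unfolding s_def by (rule normAB[OF sg r e])
  have "norm (?a *\<^sub>R (?A' - ?B') + ?a' *\<^sub>R ?AB) \<le> norm (?a *\<^sub>R (?A' - ?B')) + norm (?a' *\<^sub>R ?AB)"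
    by (rule norm_triangle_ineq)
  also have "\<dots> = ?a * norm (?A' - ?B') + (4 * e / (1 + 2 * e\<^sup>2)\<^sup>2) * norm ?AB"
    using q e by simp
  also have "\<dots> \<le> ?a * (2 / (4 * pi)) + (4 * e / (1 + 2 * e\<^sup>2)\<^sup>2) * ((e + s) / (4 * pi))"
  proof (rule add_mono)
    have "norm (?A' - ?B') \<le> norm ?A' + norm ?B'" by (rule norm_triangle_ineq4)
    also have "\<dots> \<le> 2 / (4 * pi)" using nA nB by simp
    finally show "?a * norm (?A' - ?B') \<le> ?a * (2 / (4 * pi))" using q by (intro mult_left_mono) auto
    show "(4 * e / (1 + 2 * e\<^sup>2)\<^sup>2) * norm ?AB \<le> (4 * e / (1 + 2 * e\<^sup>2)\<^sup>2) * ((e + s) / (4 * pi))"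
      using nAB e q by (intro mult_left_mono) auto
  qed
  also have "\<dots> \<le> 1 / (1 + 2 * e\<^sup>2)" by (rule realineq[OF e s_def])
  finally show ?thesis .
qed


theorem lemma4p1:
  shows "\<exists>C. \<forall>\<sigma> \<in> {1, -1}. \<forall>lam::real. \<forall>x y :: real^3.
     lam > 0 \<and> x \<noteq> y \<longrightarrow>
       cmod (R0 \<sigma> (eta_of lam) x y)
         \<le> C * (eta_of lam + sqrt (1 + (eta_of lam)\<^sup>2)) / (1 + 2 * (eta_of lam)\<^sup>2)
     \<and> norm (vector_derivative (\<lambda>e. R0 \<sigma> e x y) (at (eta_of lam)))
         \<le> C / (1 + 2 * (eta_of lam)\<^sup>2)"
proof (intro exI[of _ 1] ballI allI impI conjI)
  fix \<sigma> lam :: real and x y :: "real^3"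
  assume sgm: "\<sigma> \<in> {1, -1}" and h: "lam > 0 \<and> x \<noteq> y"
  define e where "e = eta_of lam"
  define r where "r = norm (x - y)"
  have sg: "\<bar>\<sigma>\<bar> = 1" using sgm by auto
  have r: "r > 0" using h unfolding r_def by simp
  have "1/2 \<le> sqrt (1/4 + lam)" using h by (intro real_le_rsqrt) (simp add: power2_eq_square)
  then have e0: "e \<ge> 0" unfolding e_def eta_of_def by simp
  have q: "1 + 2 * e\<^sup>2 > 0" by (simp add: add_pos_nonneg)
  have Req: "\<And>e'. R0 \<sigma> e' x y = (1 / (1 + 2 * e'\<^sup>2)) *\<^sub>R
     (exp (\<i> * complex_of_real (\<sigma> * e' * r)) / complex_of_real (4 * pi * r)
       - complex_of_real (exp (- sqrt (1 + e'\<^sup>2) * r) / (4 * pi * r)))"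
    unfolding R0_def r_def by simp
  have "cmod (R0 \<sigma> e x y) = (1 / (1 + 2 * e\<^sup>2)) * cmod
     (exp (\<i> * complex_of_real (\<sigma> * e * r)) / complex_of_real (4 * pi * r)
       - complex_of_real (exp (- sqrt (1 + e\<^sup>2) * r) / (4 * pi * r)))"
    unfolding Req using q by simp
  also have "\<dots> \<le> (1 / (1 + 2 * e\<^sup>2)) * ((e + sqrt (1 + e\<^sup>2)) / (4 * pi))"
    using normAB[OF sg r e0] q by (intro mult_left_mono) auto
  also have "\<dots> \<le> (1 / (1 + 2 * e\<^sup>2)) * (e + sqrt (1 + e\<^sup>2))"
  proof (intro mult_left_mono)
    have "e + sqrt (1 + e\<^sup>2) \<ge> 0" using e0 by simp
    moreover have "4 * pi \<ge> 1" using pi_ge_two by simp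
    ultimately show "(e + sqrt (1 + e\<^sup>2)) / (4 * pi) \<le> e + sqrt (1 + e\<^sup>2)"
      by (simp add: divide_le_eq mult_le_cancel_left1 mult_right_mono) 
  qed (use q in simp)
  also have "\<dots> = 1 * (e + sqrt (1 + e\<^sup>2)) / (1 + 2 * e\<^sup>2)" by simp
  finally show "cmod (R0 \<sigma> (eta_of lam) x y)
         \<le> 1 * (eta_of lam + sqrt (1 + (eta_of lam)\<^sup>2)) / (1 + 2 * (eta_of lam)\<^sup>2)"
    unfolding e_def .
  have fe: "(\<lambda>e'. R0 \<sigma> e' x y) = (\<lambda>e'. (1 / (1 + 2 * e'\<^sup>2)) *\<^sub>R
     (exp (\<i> * complex_of_real (\<sigma> * e' * r)) / complex_of_real (4 * pi * r)
       - complex_of_real (exp (- sqrt (1 + e'\<^sup>2) * r) / (4 * pi * r))))"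
    using Req by blast
  have D: "((\<lambda>e'. R0 \<sigma> e' x y) has_vector_derivative
     (1 / (1 + 2 * e\<^sup>2)) *\<^sub>R
     ((\<i> * of_real (\<sigma> * r) * exp (\<i> * complex_of_real (\<sigma> * e * r)) / complex_of_real (4 * pi * r))
     - complex_of_real (- (e / sqrt (1 + e\<^sup>2)) * r * exp (- sqrt (1 + e\<^sup>2) * r) / (4 * pi * r)))
     + (- 4 * e / (1 + 2 * e\<^sup>2)\<^sup>2) *\<^sub>R
     (exp (\<i> * complex_of_real (\<sigma> * e * r)) / complex_of_real (4 * pi * r)
       - complex_of_real (exp (- sqrt (1 + e\<^sup>2) * r) / (4 * pi * r)))) (at e)"
    unfolding fe
    by (rule has_vector_derivative_scaleR[OF deriva has_vector_derivative_diff[OF derivA derivB]])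
  have "norm (vector_derivative (\<lambda>e'. R0 \<sigma> e' x y) (at e)) \<le> 1 / (1 + 2 * e\<^sup>2)"
    unfolding vector_derivative_at[OF D] by (rule derivbound[OF sg r e0])
  then show "norm (vector_derivative (\<lambda>e. R0 \<sigma> e x y) (at (eta_of lam)))
         \<le> 1 / (1 + 2 * (eta_of lam)\<^sup>2)" unfolding e_def .
qed

end
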